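(* Let $A\in\mathbb{R}^{m\times d}$ have the phase retrieval property in $\mathbb{R}^d$ and let $\Omega\subset U_A$ be a convex domain. Then there exists a constant $\alpha>0$ depending only on $A$ such that $\alpha\cdot\mathrm{dist}(\Phi_A(b),\Phi_A(b'))\le\|b-b'\|$ for all $b,b'\in\Omega$.
   Context: $\|\cdot\|$ is the Euclidean norm, $|Ax|$ the entrywise absolute value. $A$ has the phase retrieval property in $\mathbb{R}^d$ if $|Ax|=|Ay|$ implies $x=\pm y$. $\Phi_A(b):=\operatorname{argmin}_{x\in\mathbb{R}^d}\|\,|Ax|-b\,\|^2$. $\mathcal{K}_A:=\{|Ax|:x\in\mathbb{R}^d\}$; $U_A$ is the set of $b\in\mathbb{R}^m$ having exactly one nearest point in $\mathcal{K}_A$. $\mathrm{dist}(\Phi_A(b),\Phi_A(b')):=\min\{\|x-cy\|: x\in\Phi_A(b),\,y\in\Phi_A(b'),\,c\in\{1,-1\}\}$. *)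

theory Defs
  imports "HOL-Analysis.Analysis"
begin

definition absmv :: "real^'d^'m \<Rightarrow> real^'d \<Rightarrow> real^'m" where
  "absmv A x = (\<chi> i. \<bar>(A *v x) $ i\<bar>)"

definition phase_retrieval :: "real^'d^'m \<Rightarrow> bool" where
  "phase_retrieval A \<longleftrightarrow> (\<forall>x y. absmv A x = absmv A y \<longrightarrow> x = y \<or> x = - y)"

definition Phi :: "real^'d^'m \<Rightarrow> real^'m \<Rightarrow> (real^'d) set" where
  "Phi A b = {x. \<forall>y. (norm (absmv A x - b))\<^sup>2 \<le> (norm (absmv A y - b))\<^sup>2}"

definition KA :: "real^'d^'m \<Rightarrow> (real^'m) set" where
  "KA A = range (absmv A)"

definition UA :: "real^'d^'m \<Rightarrow> (real^'m) set" where
  "UA A = {b. \<exists>!k. k \<in> KA A \<and> (\<forall>k'\<in>KA A. dist b k \<le> dist b k')}"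

text \<open>dist(Phi_A(b), Phi_A(b')) = min over x, y, c = +-1 of ||x - c y||
  (the minimum is attained; we write it as an infimum).\<close>
definition Phi_dist :: "real^'d^'m \<Rightarrow> real^'m \<Rightarrow> real^'m \<Rightarrow> real" where
  "Phi_dist A b b' = Inf {norm (x - c *\<^sub>R y) | x y c. x \<in> Phi A b \<and> y \<in> Phi A b' \<and> c \<in> {1, -1}}"

end

theory Submission
  imports Defs
begin

lemma interval_cover:
  fixes k :: "real \<Rightarrow> 'a::metric_space" and T :: "'i \<Rightarrow> real set"
  assumes "finite F"
    and cl: "\<And>i. closed (T i)"
    and lip: "\<And>i s t. s \<in> T i \<Longrightarrow> t \<in> T i \<Longrightarrow> dist (k s) (k t) \<le> L * \<bar>s - t\<bar>"
  shows "t0 \<le> t1 \<Longrightarrow> {t0..t1} \<subseteq> \<Union>(T ` F) \<Longrightarrow> dist (k t0) (k t1) \<le> L * (t1 - t0)"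
  using assms(1)
proof (induction F arbitrary: t0 rule: finite_psubset_induct)
  case (psubset F)
  from psubset.prems obtain i where i: "i \<in> F" "t0 \<in> T i" by auto
  define R where "R = T i \<inter> {t0..t1}"
  have Rne: "t0 \<in> R" using i psubset.prems by (auto simp: R_def)
  have Rcl: "closed R" using cl by (auto simp: R_def)
  have Rbd: "bdd_above R" by (auto simp: R_def)
  define \<tau> where "\<tau> = Sup R"
  have tR: "\<tau> \<in> R" unfolding \<tau>_def using closed_contains_Sup[OF _ Rbd Rcl] Rne by blast
  have ge: "t \<le> \<tau>" if "t \<in> R" for t unfolding \<tau>_def using cSup_upper[OF that Rbd] .
  have d1: "dist (k t0) (k \<tau>) \<le> L * (\<tau> - t0)"
    using lip[of t0 i \<tau>] i tR by (auto simp: R_def)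
  show ?case
  proof (cases "\<tau> = t1")
    case True then show ?thesis using d1 by simp
  next
    case False
    then have lt: "\<tau> < t1" using tR by (auto simp: R_def)
    have sub: "{\<tau><..t1} \<subseteq> \<Union>(T ` (F - {i}))"
    proof
      fix t assume t: "t \<in> {\<tau><..t1}"
      then have "t \<in> {t0..t1}" using tR by (auto simp: R_def)
      then obtain j where j: "j \<in> F" "t \<in> T j" using psubset.prems by auto
      have "t \<notin> T i" using ge[of t] t \<open>t \<in> {t0..t1}\<close> by (auto simp: R_def)
      then show "t \<in> \<Union>(T ` (F - {i}))" using j by auto
    qed
    have "closed (\<Union>(T ` (F - {i})))" using psubset.hyps cl by auto
    then have "closure {\<tau><..t1} \<subseteq> \<Union>(T ` (F - {i}))" using sub closure_minimal by blast
    then have sub2: "{\<tau>..t1} \<subseteq> \<Union>(T ` (F - {i}))" using lt by simp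
    have d2: "dist (k \<tau>) (k t1) \<le> L * (t1 - \<tau>)"
      using psubset.IH[of "F - {i}" \<tau>] sub2 lt i(1) by auto
    have "dist (k t0) (k t1) \<le> dist (k t0) (k \<tau>) + dist (k \<tau>) (k t1)" by (rule dist_triangle)
    also have "\<dots> \<le> L * (t1 - t0)" using d1 d2 by (simp add: algebra_simps)
    finally show ?thesis .
  qed
qed


lemma pr_kernel:
  fixes A :: "real^'d^'m"
  assumes "phase_retrieval A" "A *v x = 0"
  shows "x = 0"
proof -
  have "absmv A x = absmv A 0" using assms(2) by (simp add: absmv_def)
  then show ?thesis using assms(1) unfolding phase_retrieval_def by force
qed

definition sgnmap :: "'m set \<Rightarrow> real^'d^'m \<Rightarrow> real^'d \<Rightarrow> real^'m" where
  "sgnmap S A x = (\<chi> i. if i \<in> S then - (A *v x) $ i else (A *v x) $ i)"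

definition rmap :: "'m set \<Rightarrow> real^'d^'m \<Rightarrow> real^'d \<Rightarrow> real^'m" where
  "rmap S A x = (\<chi> i. if i \<in> S then (A *v x) $ i else 0)"

lemma linear_sgnmap: "linear (sgnmap S A)"
  by (rule linearI) (auto simp: sgnmap_def vec_eq_iff matrix_vector_right_distrib matrix_vector_mult_scaleR)

lemma linear_rmap: "linear (rmap S A)"
  by (rule linearI) (auto simp: rmap_def vec_eq_iff matrix_vector_right_distrib matrix_vector_mult_scaleR)

lemma inj_sgnmap:
  assumes "phase_retrieval A" shows "inj (sgnmap S A)"
proof -
  have "x = 0" if "sgnmap S A x = 0" for x
  proof -
    have "A *v x = 0" using that by (auto simp: sgnmap_def vec_eq_iff split: if_splits)
    then show ?thesis using pr_kernel assms by blast
  qed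
  then show ?thesis using linear_sgnmap by (metis linear_injective_0)
qed

definition sgcone :: "'m set \<Rightarrow> real^'d^'m \<Rightarrow> (real^'m) set" where
  "sgcone S A = sgnmap S A ` {x. \<forall>i. 0 \<le> sgnmap S A x $ i}"

lemma cone_closed: assumes "phase_retrieval A" shows "closed (sgcone S A)"
  unfolding sgcone_def
proof (rule closed_injective_linear_image[OF _ linear_sgnmap inj_sgnmap[OF assms]])
  have "{x. \<forall>i. 0 \<le> sgnmap S A x $ i} = (\<Inter>i. {x. 0 \<le> sgnmap S A x $ i})" by auto
  moreover have "closed {x. 0 \<le> sgnmap S A x $ i}" for i
  proof -
    have "bounded_linear (sgnmap S A)" using linear_sgnmap linear_linear by blast
    then have "continuous_on UNIV (sgnmap S A)" by (rule linear_continuous_on)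
    then show ?thesis by (intro closed_Collect_le continuous_intros) auto
  qed
  ultimately show "closed {x. \<forall>i. 0 \<le> sgnmap S A x $ i}" by auto
qed

lemma cone_convex: "convex (sgcone S A)"
  unfolding sgcone_def
proof (rule convex_linear_image[OF linear_sgnmap])
  show "convex {x. \<forall>i. 0 \<le> sgnmap S A x $ i}"
    unfolding convex_def using linear_sgnmap[of S A]
    by (auto simp: linear_add linear_scale intro!: add_nonneg_nonneg mult_nonneg_nonneg)
qed

lemma cone_sub: "sgcone S A \<subseteq> KA A"
proof
  fix y assume "y \<in> sgcone S A"
  then obtain x where x: "\<forall>i. 0 \<le> sgnmap S A x $ i" "y = sgnmap S A x" by (auto simp: sgcone_def)
  have "y = absmv A x" using x by (auto simp: vec_eq_iff absmv_def sgnmap_def split: if_splits)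
  then show "y \<in> KA A" by (simp add: KA_def)
qed

lemma in_cone: "absmv A x \<in> sgcone {i. (A *v x) $ i < 0} A"
proof -
  let ?S = "{i. (A *v x) $ i < 0}"
  have "\<forall>i. 0 \<le> sgnmap ?S A x $ i" by (auto simp: sgnmap_def)
  moreover have "absmv A x = sgnmap ?S A x" by (auto simp: vec_eq_iff absmv_def sgnmap_def)
  ultimately show ?thesis by (auto simp: sgcone_def)
qed


lemma complement_prop:
  fixes A :: "real^'d^'m"
  assumes "phase_retrieval A"
  shows "inj (rmap S A) \<or> inj (rmap (- S) A)"
proof (rule ccontr)
  assume "\<not> ?thesis"
  then obtain u v where u: "rmap S A u = 0" "u \<noteq> 0" and v: "rmap (- S) A v = 0" "v \<noteq> 0"
    using linear_rmap by (metis linear_injective_0)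
  have "absmv A (u + v) = absmv A (u - v)"
  proof -
    have "\<bar>(A *v (u + v)) $ i\<bar> = \<bar>(A *v (u - v)) $ i\<bar>" for i
    proof (cases "i \<in> S")
      case True
      then have "(A *v u) $ i = 0" using u by (auto simp: rmap_def vec_eq_iff dest: spec[of _ i])
      then show ?thesis by (simp add: matrix_vector_right_distrib matrix_vector_mult_diff_distrib)
    next
      case False
      then have "(A *v v) $ i = 0" using v by (auto simp: rmap_def vec_eq_iff dest: spec[of _ i])
      then show ?thesis by (simp add: matrix_vector_right_distrib matrix_vector_mult_diff_distrib)
    qed
    then show ?thesis by (simp add: absmv_def vec_eq_iff)
  qed
  then have "u + v = u - v \<or> u + v = - (u - v)" using assms unfolding phase_retrieval_def by blast
  then show False
  proof
    assume "u + v = u - v"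
    then have "v + v = 0" by (simp add: algebra_simps)
    then have "2 *\<^sub>R v = 0" by (simp add: scaleR_2)
    then show False using v by simp
  next
    assume "u + v = - (u - v)"
    then have "u + u = 0" by (simp add: algebra_simps)
    then have "2 *\<^sub>R u = 0" by (simp add: scaleR_2)
    then show False using u by simp
  qed
qed

lemma absdiff: "abs (abs a - abs b) = min \<bar>a - b\<bar> \<bar>a + (b::real)\<bar>"
  by (auto simp: abs_if min_def)

lemma stability:
  fixes A :: "real^'d^'m"
  assumes "phase_retrieval A"
  obtains c where "c > 0" "\<And>x y. c * min (norm (x - y)) (norm (x + y)) \<le> norm (absmv A x - absmv A y)"
proof -
  have "\<exists>B>0. (\<forall>u. B * norm u \<le> norm (rmap S A u)) \<or> (\<forall>u. B * norm u \<le> norm (rmap (- S) A u))" for S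
  proof -
    from complement_prop[OF assms, of S] show ?thesis
    proof
      assume "inj (rmap S A)"
      then obtain B where "B > 0" "\<And>x. B * norm x \<le> norm (rmap S A x)"
        using linear_inj_bounded_below_pos[OF linear_rmap] by blast
      then show ?thesis by blast
    next
      assume "inj (rmap (- S) A)"
      then obtain B where "B > 0" "\<And>x. B * norm x \<le> norm (rmap (- S) A x)"
        using linear_inj_bounded_below_pos[OF linear_rmap] by blast
      then show ?thesis by blast
    qed
  qed
  then obtain B where B: "\<And>S. B S > 0"
    "\<And>S. (\<forall>u. B S * norm u \<le> norm (rmap S A u)) \<or> (\<forall>u. B S * norm u \<le> norm (rmap (- S) A u))"
    by metis
  define c where "c = Min (range B)"
  have fin: "finite (range B)" by simp
  have cpos: "c > 0" unfolding c_def using fin B(1) by (subst Min_gr_iff) auto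
  have cle: "c \<le> B S" for S unfolding c_def using fin by (intro Min_le) auto
  show ?thesis
  proof (rule that[OF cpos])
    fix x y
    define S where "S = {i. \<bar>(A *v (x - y)) $ i\<bar> \<le> \<bar>(A *v (x + y)) $ i\<bar>}"
    have comp: "abs (abs ((A *v x) $ i) - abs ((A *v y) $ i)) = min \<bar>(A *v (x - y)) $ i\<bar> \<bar>(A *v (x + y)) $ i\<bar>" for i
      using absdiff by (simp add: matrix_vector_right_distrib matrix_vector_mult_diff_distrib)
    have n1: "norm (rmap S A (x - y)) \<le> norm (absmv A x - absmv A y)"
      by (rule norm_le_componentwise_cart) (auto simp: rmap_def absmv_def comp S_def)
    have n2: "norm (rmap (- S) A (x + y)) \<le> norm (absmv A x - absmv A y)"
      by (rule norm_le_componentwise_cart) (auto simp: rmap_def absmv_def comp S_def)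
    have nn: "0 \<le> norm (x - y)" "0 \<le> norm (x + y)" by auto
    from B(2)[of S] show "c * min (norm (x - y)) (norm (x + y)) \<le> norm (absmv A x - absmv A y)"
    proof
      assume "\<forall>u. B S * norm u \<le> norm (rmap S A u)"
      then have "B S * norm (x - y) \<le> norm (absmv A x - absmv A y)" using n1 by (meson order_trans)
      moreover have "c * min (norm (x - y)) (norm (x + y)) \<le> B S * norm (x - y)"
        using cle[of S] cpos nn by (intro mult_mono) auto
      ultimately show ?thesis by linarith
    next
      assume "\<forall>u. B S * norm u \<le> norm (rmap (- S) A u)"
      then have "B S * norm (x + y) \<le> norm (absmv A x - absmv A y)" using n2 by (meson order_trans)
      moreover have "c * min (norm (x - y)) (norm (x + y)) \<le> B S * norm (x + y)"
        using cle[of S] cpos nn by (intro mult_mono) auto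
      ultimately show ?thesis by linarith
    qed
  qed
qed


definition near :: "real^'d^'m \<Rightarrow> real^'m \<Rightarrow> real^'m" where
  "near A p = (THE k. k \<in> KA A \<and> (\<forall>k'\<in>KA A. dist p k \<le> dist p k'))"

lemma near_props:
  assumes "p \<in> UA A"
  shows "near A p \<in> KA A" "\<And>k'. k' \<in> KA A \<Longrightarrow> dist p (near A p) \<le> dist p k'"
    and "\<And>z. z \<in> KA A \<Longrightarrow> (\<forall>k'\<in>KA A. dist p z \<le> dist p k') \<Longrightarrow> z = near A p"
proof -
  have ex: "\<exists>!k. k \<in> KA A \<and> (\<forall>k'\<in>KA A. dist p k \<le> dist p k')" using assms by (simp add: UA_def)
  have "near A p \<in> KA A \<and> (\<forall>k'\<in>KA A. dist p (near A p) \<le> dist p k')"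
    unfolding near_def by (rule theI'[OF ex])
  then show "near A p \<in> KA A" "\<And>k'. k' \<in> KA A \<Longrightarrow> dist p (near A p) \<le> dist p k'" by auto
  show "\<And>z. z \<in> KA A \<Longrightarrow> (\<forall>k'\<in>KA A. dist p z \<le> dist p k') \<Longrightarrow> z = near A p"
    using ex \<open>near A p \<in> KA A \<and> _\<close> by blast
qed

lemma Phi_contains:
  assumes "p \<in> UA A" "absmv A x = near A p"
  shows "x \<in> Phi A p"
  unfolding Phi_def
proof (safe)
  fix y
  have "dist p (near A p) \<le> dist p (absmv A y)" using near_props(2)[OF assms(1)] by (simp add: KA_def)
  then have "norm (absmv A x - p) \<le> norm (absmv A y - p)" using assms(2) by (simp add: dist_norm norm_minus_commute)
  then show "(norm (absmv A x - p))\<^sup>2 \<le> (norm (absmv A y - p))\<^sup>2" by (simp add: power_mono)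
qed

lemma sgcone_ne: "sgcone S A \<noteq> {}"
proof -
  have h: "sgnmap S A 0 = 0" using linear_sgnmap linear_0 by blast
  have "sgnmap S A 0 \<in> sgcone S A" unfolding sgcone_def using h by (intro imageI) simp
  then show ?thesis by blast
qed

lemma near_in_cone:
  assumes pr: "phase_retrieval A" and p: "p \<in> UA A"
    and le: "infdist p (sgcone S A) \<le> infdist p (KA A)"
  shows "near A p \<in> sgcone S A"
proof -
  obtain z where z: "z \<in> sgcone S A" "infdist p (sgcone S A) = dist p z"
    using infdist_attains_inf[OF cone_closed[OF pr] sgcone_ne] by blast
  have zK: "z \<in> KA A" using z cone_sub by blast
  have "\<forall>k'\<in>KA A. dist p z \<le> dist p k'" using z le infdist_le by (metis order_trans)
  then have "z = near A p" using near_props(3)[OF p zK] by blast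
  then show ?thesis using z by simp
qed

lemma near_lip:
  fixes A :: "real^'d^'m"
  assumes pr: "phase_retrieval A" and cv: "convex \<Omega>" and sub: "\<Omega> \<subseteq> UA A"
    and b: "b \<in> \<Omega>" and b': "b' \<in> \<Omega>"
  shows "dist (near A b) (near A b') \<le> dist b b'"
proof -
  define p where "p t = (1 - t) *\<^sub>R b + t *\<^sub>R b'" for t :: real
  have pU: "p t \<in> UA A" if "t \<in> {0..1}" for t
    using that sub convexD_alt[OF cv b b'] unfolding p_def by auto
  define T where "T S = {0..1} \<inter> {t. infdist (p t) (sgcone S A) \<le> infdist (p t) (KA A)}" for S :: "'m set"
  have pcont: "continuous_on UNIV p" unfolding p_def by (intro continuous_intros)
  have clT: "closed (T S)" for S
    unfolding T_def
    by (intro closed_Int closed_atLeastAtMost closed_Collect_le continuous_on_infdist pcont)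
  have pd: "dist (p s) (p t) = \<bar>s - t\<bar> * dist b b'" for s t
  proof -
    have "p s - p t = (s - t) *\<^sub>R (b' - b)" unfolding p_def by (simp add: algebra_simps)
    then show ?thesis by (simp add: dist_norm norm_minus_commute)
  qed
  have lip: "dist (near A (p s)) (near A (p t)) \<le> dist b b' * \<bar>s - t\<bar>" if "s \<in> T S" "t \<in> T S" for S s t
  proof -
    have s: "s \<in> {0..1}" and t: "t \<in> {0..1}" using that by (auto simp: T_def)
    have ns: "near A (p s) \<in> sgcone S A" using near_in_cone[OF pr pU[OF s]] that by (auto simp: T_def)
    have nt: "near A (p t) \<in> sgcone S A" using near_in_cone[OF pr pU[OF t]] that by (auto simp: T_def)
    have cs: "near A (p s) = closest_point (sgcone S A) (p s)"
      by (rule closest_point_unique[OF cone_convex cone_closed[OF pr] ns])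
         (use near_props(2)[OF pU[OF s]] cone_sub in blast)
    have ct: "near A (p t) = closest_point (sgcone S A) (p t)"
      by (rule closest_point_unique[OF cone_convex cone_closed[OF pr] nt])
         (use near_props(2)[OF pU[OF t]] cone_sub in blast)
    have "dist (near A (p s)) (near A (p t)) \<le> dist (p s) (p t)"
      unfolding cs ct by (rule closest_point_lipschitz[OF cone_convex cone_closed[OF pr] sgcone_ne])
    then show ?thesis using pd by (simp add: mult.commute)
  qed
  have cover: "{0..1} \<subseteq> \<Union>(T ` UNIV)"
  proof
    fix t :: real assume t: "t \<in> {0..1}"
    obtain x where x: "near A (p t) = absmv A x" using near_props(1)[OF pU[OF t]] by (auto simp: KA_def)
    let ?S = "{i. (A *v x) $ i < 0}"
    have "infdist (p t) (sgcone ?S A) \<le> dist (p t) (near A (p t))"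
      using in_cone[of A x] x by (simp add: infdist_le)
    also have "\<dots> \<le> infdist (p t) (KA A)"
    proof -
      have "KA A \<noteq> {}" by (simp add: KA_def)
      then show ?thesis using near_props(2)[OF pU[OF t]]
        by (simp add: infdist_notempty cINF_greatest)
    qed
    finally show "t \<in> \<Union>(T ` UNIV)" using t by (auto simp: T_def)
  qed
  have "dist (near A (p 0)) (near A (p 1)) \<le> dist b b' * (1 - 0)"
    by (rule interval_cover[where T = T and F = UNIV, OF _ clT lip]) (use cover in auto)
  then show ?thesis by (simp add: p_def)
qed

theorem theorem5p5:
  fixes A :: "real^'d^'m"
  assumes "phase_retrieval A"
  shows "\<exists>\<alpha>>0. \<forall>\<Omega>. open \<Omega> \<and> connected \<Omega> \<and> \<Omega> \<noteq> {} \<and> convex \<Omega> \<and> \<Omega> \<subseteq> UA A \<longrightarrow>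
           (\<forall>b\<in>\<Omega>. \<forall>b'\<in>\<Omega>. \<alpha> * Phi_dist A b b' \<le> norm (b - b'))"
proof -
  obtain c where c: "c > 0" "\<And>x y. c * min (norm (x - y)) (norm (x + y)) \<le> norm (absmv A x - absmv A y)"
    using stability[OF assms] by blast
  have "\<forall>b\<in>\<Omega>. \<forall>b'\<in>\<Omega>. c * Phi_dist A b b' \<le> norm (b - b')"
    if "convex \<Omega>" "\<Omega> \<subseteq> UA A" for \<Omega>
  proof (intro ballI)
    fix b b' assume b: "b \<in> \<Omega>" and b': "b' \<in> \<Omega>"
    have bU: "b \<in> UA A" and bU': "b' \<in> UA A" using b b' that by auto
    obtain x where x: "absmv A x = near A b" using near_props(1)[OF bU] by (auto simp: KA_def)
    obtain y where y: "absmv A y = near A b'" using near_props(1)[OF bU'] by (auto simp: KA_def)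
    have xP: "x \<in> Phi A b" by (rule Phi_contains[OF bU x])
    have yP: "y \<in> Phi A b'" by (rule Phi_contains[OF bU' y])
    let ?D = "{norm (x - c *\<^sub>R y) | x y c. x \<in> Phi A b \<and> y \<in> Phi A b' \<and> c \<in> {1, -1}}"
    have bdd: "bdd_below ?D" by (rule bdd_belowI[of _ 0]) auto
    have "norm (x - 1 *\<^sub>R y) \<in> ?D" using xP yP by blast
    then have d1: "Phi_dist A b b' \<le> norm (x - y)" unfolding Phi_dist_def using cInf_lower[OF _ bdd] by force
    have "norm (x - (-1) *\<^sub>R y) \<in> ?D" using xP yP by blast
    then have d2: "Phi_dist A b b' \<le> norm (x + y)" unfolding Phi_dist_def using cInf_lower[OF _ bdd] by force
    have "c * Phi_dist A b b' \<le> c * min (norm (x - y)) (norm (x + y))"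
      using d1 d2 c(1) by (intro mult_left_mono) auto
    also have "\<dots> \<le> norm (absmv A x - absmv A y)" by (rule c(2))
    also have "\<dots> = dist (near A b) (near A b')" by (simp add: x y dist_norm)
    also have "\<dots> \<le> dist b b'" by (rule near_lip[OF assms that b b'])
    finally show "c * Phi_dist A b b' \<le> norm (b - b')" by (simp add: dist_norm)
  qed
  then show ?thesis using c(1) by blast
qed

end
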